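(* Consider an unreplicated completely randomized design ($N_q=1$ for all $q$, so $Q=N$) with $S(q,q)>0$ for all $q$, and a grouping $\{\langle g\rangle\}_{g=1}^G$. Then for each group, $\mathbb E\{\hat Y_{\langle g\rangle}\}=\overline Y_{\langle g\rangle}$, where $\overline Y_{\langle g\rangle}=|\langle g\rangle|^{-1}\sum_{q\in\langle g\rangle}\overline Y(q)$. If moreover Condition 5 holds, then for every $q$, with $\langle g\rangle$ the group containing $q$, $$\mathbb E\{\hat V_{\hat Y}(q,q)\}\ge S(q,q)+\Omega(q,q)+\mu_{\langle g\rangle}(\overline Y(q)-\overline Y_{\langle g\rangle})^2,$$ where $$\Omega(q,q)=\mu_{\langle g\rangle}|\langle g\rangle|^{-2}\Big(1-\frac{\varrho_{\langle g\rangle}}N-\frac{|\langle g\rangle|-1}N\Big)\sum_{q'\in\langle g\rangle,q'\neq q}S(q',q')\ \ge0.$$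
   Context: Randomization model with $N$ units and $Q$ treatment levels; unit $i$ has fixed real potential outcomes $Y_i(1),\dots,Y_i(Q)$. Unreplicated complete randomization: $N_q=1$ for all $q$ and the assignment is a uniformly random bijection between units and levels; $Y_q$ denotes the observed outcome of the unique unit assigned to level $q$. $\overline Y(q)=N^{-1}\sum_iY_i(q)$, $S(q,q')=(N-1)^{-1}\sum_i(Y_i(q)-\overline Y(q))(Y_i(q')-\overline Y(q'))$, and $S^\star(q,q')=S(q,q')/\sqrt{S(q,q)S(q',q')}$. Grouping: a fixed (data-independent) partition $[Q]=\bigcup_{g=1}^G\langle g\rangle$ into disjoint groups with $|\langle g\rangle|\ge2$. For each group, $\hat Y_{\langle g\rangle}=|\langle g\rangle|^{-1}\sum_{q\in\langle g\rangle}Y_q$, $\mu_{\langle g\rangle}=(1-2N^{-1})^{-1}(1-|\langle g\rangle|^{-1})^{-2}$, and for $q\in\langle g\rangle$, $\hat V_{\hat Y}(q,q)=\mu_{\langle g\rangle}(Y_q-\hat Y_{\langle g\rangle})^2$. $\varrho_{\langle g\rangle}$ is the largest eigenvalue of $(S^\star(q,q'))_{q,q'\in\langle g\rangle}$. Condition 5: $N-\varrho_{\langle g\rangle}-(|\langle g\rangle|-1)\ge0$ for all groups. *)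

theory Defs
  imports Complex_Main "HOL-Combinatorics.Permutations"
begin

(* Units and treatment levels are both indexed by {..<N} (Q = N).
   Y i q is the potential outcome Y_i(q) of unit i under level q. *)

definition Ybar :: "nat \<Rightarrow> (nat \<Rightarrow> nat \<Rightarrow> real) \<Rightarrow> nat \<Rightarrow> real" where
  "Ybar N Y q = (\<Sum>i<N. Y i q) / real N"

definition Scov :: "nat \<Rightarrow> (nat \<Rightarrow> nat \<Rightarrow> real) \<Rightarrow> nat \<Rightarrow> nat \<Rightarrow> real" where
  "Scov N Y q q' = (\<Sum>i<N. (Y i q - Ybar N Y q) * (Y i q' - Ybar N Y q')) / (real N - 1)"

definition Scorr :: "nat \<Rightarrow> (nat \<Rightarrow> nat \<Rightarrow> real) \<Rightarrow> nat \<Rightarrow> nat \<Rightarrow> real" where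
  "Scorr N Y q q' = Scov N Y q q' / sqrt (Scov N Y q q * Scov N Y q' q')"

(* Assignment: sigma q is the unit assigned to level q; sigma is a uniformly
   random permutation of {..<N}. *)
definition obs :: "(nat \<Rightarrow> nat \<Rightarrow> real) \<Rightarrow> (nat \<Rightarrow> nat) \<Rightarrow> nat \<Rightarrow> real" where
  "obs Y \<sigma> q = Y (\<sigma> q) q"

definition Eperm :: "nat \<Rightarrow> ((nat \<Rightarrow> nat) \<Rightarrow> real) \<Rightarrow> real" where
  "Eperm N f = (\<Sum>\<sigma>\<in>{\<sigma>. \<sigma> permutes {..<N}}. f \<sigma>) / fact N"

definition grouping :: "nat \<Rightarrow> nat set set \<Rightarrow> bool" where
  "grouping N P \<longleftrightarrow> \<Union>P = {..<N} \<and> (\<forall>g\<in>P. card g \<ge> 2)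
     \<and> (\<forall>g\<in>P. \<forall>h\<in>P. g \<noteq> h \<longrightarrow> g \<inter> h = {})"

definition Yhat_grp :: "(nat \<Rightarrow> nat \<Rightarrow> real) \<Rightarrow> nat set \<Rightarrow> (nat \<Rightarrow> nat) \<Rightarrow> real" where
  "Yhat_grp Y g \<sigma> = (\<Sum>q\<in>g. obs Y \<sigma> q) / real (card g)"

definition Ybar_grp :: "nat \<Rightarrow> (nat \<Rightarrow> nat \<Rightarrow> real) \<Rightarrow> nat set \<Rightarrow> real" where
  "Ybar_grp N Y g = (\<Sum>q\<in>g. Ybar N Y q) / real (card g)"

definition mu_grp :: "nat \<Rightarrow> nat set \<Rightarrow> real" where
  "mu_grp N g = inverse ((1 - 2 / real N) * (1 - 1 / real (card g))^2)"

definition Vhat :: "nat \<Rightarrow> (nat \<Rightarrow> nat \<Rightarrow> real) \<Rightarrow> nat set \<Rightarrow> nat \<Rightarrow> (nat \<Rightarrow> nat) \<Rightarrow> real" where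
  "Vhat N Y g q \<sigma> = mu_grp N g * (obs Y \<sigma> q - Yhat_grp Y g \<sigma>)^2"

definition eigenvalues_on :: "nat set \<Rightarrow> (nat \<Rightarrow> nat \<Rightarrow> real) \<Rightarrow> real set" where
  "eigenvalues_on g M = {l. \<exists>v. (\<exists>q\<in>g. v q \<noteq> 0) \<and>
       (\<forall>q\<in>g. (\<Sum>q'\<in>g. M q q' * v q') = l * v q)}"

definition rho_grp :: "nat \<Rightarrow> (nat \<Rightarrow> nat \<Rightarrow> real) \<Rightarrow> nat set \<Rightarrow> real" where
  "rho_grp N Y g = Max (eigenvalues_on g (Scorr N Y))"

definition Omega :: "nat \<Rightarrow> (nat \<Rightarrow> nat \<Rightarrow> real) \<Rightarrow> nat set \<Rightarrow> nat \<Rightarrow> real" where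
  "Omega N Y g q = mu_grp N g / real (card g)^2
     * (1 - rho_grp N Y g / real N - (real (card g) - 1) / real N)
     * (\<Sum>q'\<in>g - {q}. Scov N Y q' q')"

definition condition5 :: "nat \<Rightarrow> (nat \<Rightarrow> nat \<Rightarrow> real) \<Rightarrow> nat set set \<Rightarrow> bool" where
  "condition5 N Y P \<longleftrightarrow> (\<forall>g\<in>P. real N - rho_grp N Y g - (real (card g) - 1) \<ge> 0)"

end

theory Submission
  imports Defs "HOL-Analysis.Function_Topology" "Jordan_Normal_Form.Spectral_Radius"
begin


definition qf :: "(nat \<Rightarrow> nat \<Rightarrow> real) \<Rightarrow> nat set \<Rightarrow> (nat \<Rightarrow> real) \<Rightarrow> real" where
  "qf M g x = (\<Sum>p\<in>g. x p * (\<Sum>p'\<in>g. M p p' * x p'))"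

lemma quad_zero:
  fixes a b :: real
  assumes "\<forall>t. 0 \<le> 2*t*a + t^2*b" shows "a = 0"
proof (rule ccontr)
  assume a: "a \<noteq> 0"
  define B where "B = \<bar>b\<bar> + 1"
  have B: "B \<ge> 1" unfolding B_def by simp
  define t where "t = - a / B"
  have "0 \<le> 2*t*a + t^2*b" using assms by blast
  also have "t^2*b \<le> t^2 * \<bar>b\<bar>" by (simp add: mult_left_mono)
  hence "2*t*a + t^2*b \<le> 2*t*a + t^2*(B - 1)" unfolding B_def by simp
  also have "2*t*a + t^2*(B - 1) = -(a*a * (B + 1) / (B*B))"
    unfolding t_def using B by (simp add: field_simps power2_eq_square)
  also have "\<dots> < 0"
  proof -
    have aa: "0 < a*a" using a by (cases "a > 0") (auto intro: mult_pos_pos mult_neg_neg)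
    have bb: "0 < (B+1)/(B*B)" using B by (simp add: divide_pos_pos)
    have "0 < (a*a)*((B+1)/(B*B))" using mult_pos_pos[OF aa bb] .
    thus ?thesis by simp
  qed
  finally show False by simp
qed

lemma sum_delta_l:
  fixes f :: "nat \<Rightarrow> real"
  assumes "finite A" "p \<in> A"
  shows "(\<Sum>x\<in>A. (if x = p then 1 else 0) * f x) = f p"
proof -
  have "(\<Sum>x\<in>A. (if x = p then 1 else 0) * f x) = (\<Sum>x\<in>A. if x = p then f x else 0)"
    by (rule sum.cong) auto
  thus ?thesis using assms by simp
qed

lemma sum_delta_r:
  fixes f :: "nat \<Rightarrow> real"
  assumes "finite A" "p \<in> A"
  shows "(\<Sum>x\<in>A. f x * (if x = p then 1 else 0)) = f p"
  using sum_delta_l[OF assms, of f] by (simp add: mult.commute)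

lemma finite_eigs:
  assumes "finite g"
  shows "finite (eigenvalues_on g M)"
proof -
  define xs where "xs = sorted_list_of_set g"
  define m where "m = length xs"
  define A :: "real mat" where "A = mat m m (\<lambda>(i,j). M (xs!i) (xs!j))"
  have A: "A \<in> carrier_mat m m" unfolding A_def by simp
  have dist: "distinct xs" and setxs: "set xs = g" using assms unfolding xs_def by auto
  have bij: "bij_betw ((!) xs) {..<m} g" using bij_betw_nth[OF dist _ setxs[symmetric]] m_def by simp
  have "eigenvalues_on g M \<subseteq> spectrum A"
  proof
    fix l assume "l \<in> eigenvalues_on g M"
    then obtain v where nz: "\<exists>q\<in>g. v q \<noteq> 0" and ev: "\<forall>q\<in>g. (\<Sum>q'\<in>g. M q q' * v q') = l * v q"
      unfolding eigenvalues_on_def by blast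
    define w where "w = vec m (\<lambda>i. v (xs!i))"
    have wc: "w \<in> carrier_vec (dim_row A)" using A unfolding w_def by simp
    obtain q where q: "q \<in> g" "v q \<noteq> 0" using nz by blast
    then obtain i where i: "i < m" "xs!i = q" using setxs unfolding m_def by (metis in_set_conv_nth)
    have "w \<noteq> 0\<^sub>v (dim_row A)"
    proof
      assume "w = 0\<^sub>v (dim_row A)"
      hence "w $ i = 0" using i A by simp
      thus False using i q unfolding w_def by simp
    qed
    moreover have "A *\<^sub>v w = l \<cdot>\<^sub>v w"
    proof (rule eq_vecI)
      fix i assume i: "i < dim_vec (l \<cdot>\<^sub>v w)"
      hence im: "i < m" unfolding w_def by simp
      have "(A *\<^sub>v w) $ i = (\<Sum>j\<in>{0..<m}. M (xs!i) (xs!j) * v (xs!j))"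
        using im A unfolding A_def w_def by (simp add: scalar_prod_def)
      also have "\<dots> = (\<Sum>j\<in>{..<m}. M (xs!i) (xs!j) * v (xs!j))"
        by (simp add: atLeast0LessThan)
      also have "\<dots> = (\<Sum>q'\<in>g. M (xs!i) q' * v q')"
        using sum.reindex_bij_betw[OF bij, of "\<lambda>q'. M (xs!i) q' * v q'"] by simp
      also have "\<dots> = l * v (xs!i)" using ev im setxs m_def by (metis nth_mem)
      finally show "(A *\<^sub>v w) $ i = (l \<cdot>\<^sub>v w) $ i" using im unfolding w_def by simp
    qed (simp add: w_def A_def)
    ultimately have "eigenvector A w l" using wc unfolding eigenvector_def by blast
    thus "l \<in> spectrum A" unfolding spectrum_def eigenvalue_def by blast
  qed
  thus ?thesis using card_finite_spectrum(1)[OF A] finite_subset by blast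
qed

lemma max_eig_exists:
  fixes M :: "nat \<Rightarrow> nat \<Rightarrow> real"
  assumes fin: "finite g" and ne: "g \<noteq> {}" and sym: "\<forall>p\<in>g. \<forall>p'\<in>g. M p p' = M p' p"
  shows "\<exists>l\<in>eigenvalues_on g M. \<forall>x. qf M g x \<le> l * (\<Sum>p\<in>g. (x p)^2)"
proof -
  define S where "S = (\<lambda>i. if i \<in> g then {-1..1::real} else {0})"
  define K where "K = PiE UNIV S \<inter> {x. (\<Sum>p\<in>g. (x p)^2) = 1}"
  have "compactin euclidean (PiE UNIV S)"
    using compactin_PiE[of "\<lambda>i. euclidean" UNIV S] unfolding euclidean_product_topology
    by (auto simp: S_def compactin_euclidean_iff)
  hence c1: "compact (PiE UNIV S)" by (simp add: compactin_euclidean_iff)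
  have cont1: "continuous_on UNIV (\<lambda>x::nat\<Rightarrow>real. \<Sum>p\<in>g. (x p)^2)"
    by (intro continuous_on_sum continuous_on_power continuous_on_product_coordinates)
  have c2: "closed {x::nat\<Rightarrow>real. (\<Sum>p\<in>g. (x p)^2) = 1}"
    by (rule closed_Collect_eq[OF cont1 continuous_on_const])
  have cK: "compact K" unfolding K_def using c1 c2 by (rule compact_Int_closed)
  obtain q0 where q0: "q0 \<in> g" using ne by blast
  define x0 where "x0 = (\<lambda>i. if i = q0 then 1 else 0::real)"
  have x0sq: "(x0 p)^2 = x0 p" for p unfolding x0_def by simp
  have "(\<Sum>p\<in>g. (x0 p)^2) = 1" unfolding x0sq using q0 fin by (simp add: x0_def)
  hence "x0 \<in> K" unfolding K_def S_def using q0
    by (auto simp: PiE_def Pi_def extensional_def x0_def)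
  hence Kne: "K \<noteq> {}" by blast
  have contq: "continuous_on K (qf M g)" unfolding qf_def
    by (intro continuous_on_sum continuous_on_mult continuous_on_const continuous_on_subset[OF continuous_on_product_coordinates]) auto
  obtain xs where xsK: "xs \<in> K" and xsmax: "\<forall>y\<in>K. qf M g y \<le> qf M g xs"
    using continuous_attains_sup[OF cK Kne contq] by blast
  define l where "l = qf M g xs"
  have xsn: "(\<Sum>p\<in>g. (xs p)^2) = 1" using xsK unfolding K_def by simp
  have bound: "qf M g z \<le> l * (\<Sum>p\<in>g. (z p)^2)" for z
  proof (cases "(\<Sum>p\<in>g. (z p)^2) = 0")
    case True
    hence "\<forall>p\<in>g. z p = 0" using fin by (simp add: sum_nonneg_eq_0_iff)
    thus ?thesis using True unfolding qf_def by simp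
  next
    case False
    define n where "n = (\<Sum>p\<in>g. (z p)^2)"
    have npos: "n > 0" using False unfolding n_def by (simp add: sum_nonneg order_le_neq_trans)
    define s where "s = sqrt n"
    have spos: "s > 0" using npos unfolding s_def by simp
    have ss: "s * s = n" using npos unfolding s_def by simp
    define y where "y = (\<lambda>i. if i \<in> g then z i / s else 0)"
    have ysum: "(\<Sum>p\<in>g. (y p)^2) = 1"
    proof -
      have "(\<Sum>p\<in>g. (y p)^2) = (\<Sum>p\<in>g. (z p)^2 / n)"
        unfolding y_def by (intro sum.cong) (auto simp: power_divide ss[symmetric] power2_eq_square)
      also have "\<dots> = 1" using npos unfolding n_def by (simp add: sum_divide_distrib[symmetric])
      finally show ?thesis .
    qed
    have "y \<in> K"
    proof -
      have "(y i)^2 \<le> 1" if "i \<in> g" for i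
        using member_le_sum[of i g "\<lambda>p. (y p)^2"] that fin ysum by simp
      hence "\<bar>y i\<bar> \<le> 1" if "i \<in> g" for i using that abs_le_square_iff[of "y i" 1] by simp
      hence yb: "-1 \<le> y i \<and> y i \<le> 1" if "i \<in> g" for i using that by (simp add: abs_le_iff)
      have y0: "y i = 0" if "i \<notin> g" for i using that unfolding y_def by simp
      show ?thesis unfolding K_def S_def using ysum yb y0
        by (auto simp: PiE_def Pi_def extensional_def)
    qed
    hence "qf M g y \<le> l" using xsmax unfolding l_def by blast
    moreover have "qf M g y = qf M g z / n"
    proof -
      have "qf M g y = (\<Sum>p\<in>g. (z p * (\<Sum>p'\<in>g. M p p' * z p')) / n)"
        unfolding qf_def y_def
        by (intro sum.cong refl) (auto simp: ss[symmetric] sum_divide_distrib[symmetric] field_simps intro!: sum.cong)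
      thus ?thesis unfolding qf_def by (simp add: sum_divide_distrib[symmetric])
    qed
    ultimately have "qf M g z / n \<le> l" by simp
    thus ?thesis using npos unfolding n_def by (simp add: pos_divide_le_eq mult.commute)
  qed
  have eig: "(\<Sum>p'\<in>g. M p p' * xs p') = l * xs p" if p: "p \<in> g" for p
  proof -
    define e where "e = (\<lambda>i. if i = p then 1 else 0::real)"
    define a where "a = (\<Sum>p'\<in>g. M p p' * xs p')"
    have mvx: "(\<Sum>p''\<in>g. M p' p'' * (xs p'' + t * e p'')) = (\<Sum>p''\<in>g. M p' p'' * xs p'') + t * M p' p" for p' t
    proof -
      have d: "(\<Sum>p''\<in>g. M p' p'' * e p'') = (\<Sum>p''\<in>g. if p'' = p then M p' p else 0)"
        by (rule sum.cong) (auto simp: e_def)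
      have "(\<Sum>p''\<in>g. M p' p'' * (xs p'' + t * e p'')) = (\<Sum>p''\<in>g. M p' p'' * xs p'' + t * (M p' p'' * e p''))"
        by (intro sum.cong) (auto simp: algebra_simps)
      also have "\<dots> = (\<Sum>p''\<in>g. M p' p'' * xs p'') + t * (\<Sum>p''\<in>g. M p' p'' * e p'')"
        by (simp add: sum.distrib sum_distrib_left)
      finally show ?thesis unfolding d using p fin by simp
    qed
    have ex: "qf M g (\<lambda>i. xs i + t * e i) = l + 2 * t * a + t^2 * M p p" for t
    proof -
      have "qf M g (\<lambda>i. xs i + t * e i) = (\<Sum>p'\<in>g. (xs p' + t * e p') * ((\<Sum>p''\<in>g. M p' p'' * xs p'') + t * M p' p))"
        unfolding qf_def mvx ..
      also have "\<dots> = l + t * (\<Sum>p'\<in>g. xs p' * M p' p) + t * (\<Sum>p'\<in>g. e p' * (\<Sum>p''\<in>g. M p' p'' * xs p'')) + t^2 * (\<Sum>p'\<in>g. e p' * M p' p)"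
        unfolding l_def qf_def by (simp add: algebra_simps sum.distrib sum_distrib_left power2_eq_square)
      also have "(\<Sum>p'\<in>g. xs p' * M p' p) = a" unfolding a_def using sym p
        by (intro sum.cong) auto
      also have "(\<Sum>p'\<in>g. e p' * (\<Sum>p''\<in>g. M p' p'' * xs p'')) = a" unfolding a_def e_def
        by (rule sum_delta_l[OF fin p])
      also have "(\<Sum>p'\<in>g. e p' * M p' p) = M p p" unfolding e_def
        by (rule sum_delta_l[OF fin p])
      finally show ?thesis by simp
    qed
    have en: "(\<Sum>i\<in>g. (xs i + t * e i)^2) = 1 + 2 * t * xs p + t^2" for t
    proof -
      have "(\<Sum>i\<in>g. (xs i + t * e i)^2) = (\<Sum>i\<in>g. (xs i)^2) + 2 * t * (\<Sum>i\<in>g. xs i * e i) + t^2 * (\<Sum>i\<in>g. (e i)^2)"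
        by (simp add: power2_eq_square algebra_simps sum.distrib sum_distrib_left)
      also have "(\<Sum>i\<in>g. xs i * e i) = xs p" unfolding e_def by (rule sum_delta_r[OF fin p])
      also have "(\<Sum>i\<in>g. (e i)^2) = 1"
      proof -
        have "(\<Sum>i\<in>g. (e i)^2) = (\<Sum>i\<in>g. if i = p then 1 else 0)" by (rule sum.cong) (auto simp: e_def)
        thus ?thesis using p fin by simp
      qed
      finally show ?thesis using xsn by simp
    qed
    have "\<forall>t. 0 \<le> 2*t*(l * xs p - a) + t^2*(l - M p p)"
    proof
      fix t
      have "l + 2 * t * a + t^2 * M p p \<le> l * (1 + 2 * t * xs p + t^2)"
        using bound[of "\<lambda>i. xs i + t * e i"] ex en by simp
      thus "0 \<le> 2*t*(l * xs p - a) + t^2*(l - M p p)" by (simp add: algebra_simps)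
    qed
    hence "l * xs p - a = 0" by (rule quad_zero)
    thus ?thesis unfolding a_def by simp
  qed
  have "\<exists>q\<in>g. xs q \<noteq> 0"
  proof (rule ccontr)
    assume "\<not> ?thesis"
    hence "(\<Sum>p\<in>g. (xs p)^2) = 0" by simp
    thus False using xsn by simp
  qed
  hence "l \<in> eigenvalues_on g M" unfolding eigenvalues_on_def using eig by blast
  thus ?thesis using bound by blast
qed

lemma rho_bound:
  fixes M :: "nat \<Rightarrow> nat \<Rightarrow> real"
  assumes fin: "finite g" and ne: "g \<noteq> {}" and sym: "\<forall>p\<in>g. \<forall>p'\<in>g. M p p' = M p' p"
  shows "qf M g x \<le> Max (eigenvalues_on g M) * (\<Sum>p\<in>g. (x p)^2)"
proof -
  obtain l where l: "l \<in> eigenvalues_on g M" and b: "\<forall>x. qf M g x \<le> l * (\<Sum>p\<in>g. (x p)^2)"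
    using max_eig_exists[OF assms] by blast
  have "l \<le> Max (eigenvalues_on g M)" using l finite_eigs[OF fin] by simp
  hence "l * (\<Sum>p\<in>g. (x p)^2) \<le> Max (eigenvalues_on g M) * (\<Sum>p\<in>g. (x p)^2)"
    by (intro mult_right_mono sum_nonneg) auto
  thus ?thesis using b by (meson order_trans)
qed



lemma sum_perm1:
  fixes h :: "nat \<Rightarrow> real"
  assumes fin: "finite A" and q: "q \<in> A"
  shows "(\<Sum>\<sigma>\<in>{\<sigma>. \<sigma> permutes A}. h (\<sigma> q)) = fact (card A - 1) * (\<Sum>i\<in>A. h i)"
proof -
  define S where "S = A - {q}"
  have AS: "A = insert q S" and qS: "q \<notin> S" and finS: "finite S" using q fin unfolding S_def by auto
  have cS: "card S = card A - 1" using q fin unfolding S_def by simp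
  have "(\<Sum>\<sigma>\<in>{\<sigma>. \<sigma> permutes A}. h (\<sigma> q))
      = (\<Sum>b\<in>insert q S. \<Sum>r\<in>{r. r permutes S}. h ((transpose q b \<circ> r) q))"
    unfolding AS by (rule sum_over_permutations_insert[OF finS qS])
  also have "\<dots> = (\<Sum>b\<in>insert q S. \<Sum>r\<in>{r. r permutes S}. h b)"
  proof (intro sum.cong refl)
    fix b r assume "r \<in> {r. r permutes S}"
    hence "r q = q" using qS by (simp add: permutes_not_in)
    thus "h ((transpose q b \<circ> r) q) = h b" by simp
  qed
  also have "\<dots> = (\<Sum>b\<in>A. fact (card A - 1) * h b)"
    unfolding AS[symmetric] using card_permutations[OF cS finS] by simp
  finally show ?thesis by (simp add: sum_distrib_left)
qed

lemma sum_perm2: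
  fixes h :: "nat \<Rightarrow> nat \<Rightarrow> real"
  assumes fin: "finite A" and q: "q \<in> A" and q': "q' \<in> A" and qq: "q \<noteq> q'"
  shows "(\<Sum>\<sigma>\<in>{\<sigma>. \<sigma> permutes A}. h (\<sigma> q) (\<sigma> q')) = fact (card A - 2) * (\<Sum>i\<in>A. \<Sum>j\<in>A - {i}. h i j)"
proof -
  define S where "S = A - {q}"
  have AS: "A = insert q S" and qS: "q \<notin> S" and finS: "finite S" using q fin unfolding S_def by auto
  have cS: "card S = card A - 1" using q fin unfolding S_def by simp
  have q'S: "q' \<in> S" using q' qq unfolding S_def by auto
  have "(\<Sum>\<sigma>\<in>{\<sigma>. \<sigma> permutes A}. h (\<sigma> q) (\<sigma> q'))
      = (\<Sum>b\<in>insert q S. \<Sum>r\<in>{r. r permutes S}. h ((transpose q b \<circ> r) q) ((transpose q b \<circ> r) q'))"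
    unfolding AS by (rule sum_over_permutations_insert[OF finS qS])
  also have "\<dots> = (\<Sum>b\<in>insert q S. \<Sum>r\<in>{r. r permutes S}. h b (transpose q b (r q')))"
  proof (intro sum.cong refl)
    fix b r assume "r \<in> {r. r permutes S}"
    hence "r q = q" using qS by (simp add: permutes_not_in)
    thus "h ((transpose q b \<circ> r) q) ((transpose q b \<circ> r) q') = h b (transpose q b (r q'))" by simp
  qed
  also have "\<dots> = (\<Sum>b\<in>A. fact (card A - 2) * (\<Sum>c\<in>A - {b}. h b c))"
    unfolding AS[symmetric]
  proof (intro sum.cong refl)
    fix b assume b: "b \<in> A"
    have "(\<Sum>r\<in>{r. r permutes S}. h b (transpose q b (r q'))) = fact (card S - 1) * (\<Sum>c\<in>S. h b (transpose q b c))"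
      by (rule sum_perm1[OF finS q'S])
    also have "card S - 1 = card A - 2" using cS by simp
    also have "(\<Sum>c\<in>S. h b (transpose q b c)) = (\<Sum>c\<in>A - {b}. h b c)"
    proof (rule sum.reindex_bij_betw)
      show "bij_betw (transpose q b) S (A - {b})"
        unfolding bij_betw_def
      proof
        show "inj_on (transpose q b) S" by simp
        show "transpose q b ` S = A - {b}"
        proof -
          have "transpose q b ` S = transpose q b ` (A - {q})" unfolding S_def ..
          also have "\<dots> = transpose q b ` A - transpose q b ` {q}"
            by (rule image_set_diff[OF inj_transpose])
          also have "\<dots> = A - {b}" using q b by simp
          finally show ?thesis .
        qed
      qed
    qed
    finally show "(\<Sum>r\<in>{r. r permutes S}. h b (transpose q b (r q'))) = fact (card A - 2) * (\<Sum>c\<in>A - {b}. h b c)" .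
  qed
  finally show ?thesis by (simp add: sum_distrib_left)
qed



lemma Eperm_sum:
  assumes "finite A"
  shows "Eperm N (\<lambda>\<sigma>. \<Sum>p\<in>A. F p \<sigma>) = (\<Sum>p\<in>A. Eperm N (F p))"
  unfolding Eperm_def by (subst sum.swap) (simp add: sum_divide_distrib)

lemma Eperm_cmult: "Eperm N (\<lambda>\<sigma>. c * F \<sigma>) = c * Eperm N F"
  unfolding Eperm_def by (simp add: sum_distrib_left)

lemma E1:
  fixes f :: "nat \<Rightarrow> real"
  assumes "q < N"
  shows "Eperm N (\<lambda>\<sigma>. f (\<sigma> q)) = (\<Sum>i<N. f i) / real N"
proof -
  have "Eperm N (\<lambda>\<sigma>. f (\<sigma> q)) = fact (N - 1) * (\<Sum>i<N. f i) / fact N"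
    unfolding Eperm_def using sum_perm1[of "{..<N}" q f] assms by simp
  also have "fact N = real N * fact (N - 1)" using assms fact_reduce[of N] by simp
  finally show ?thesis by simp
qed

lemma E2:
  fixes f :: "nat \<Rightarrow> nat \<Rightarrow> real"
  assumes "q < N" "q' < N" "q \<noteq> q'"
  shows "Eperm N (\<lambda>\<sigma>. f (\<sigma> q) (\<sigma> q')) = (\<Sum>i<N. \<Sum>j\<in>{..<N} - {i}. f i j) / (real N * (real N - 1))"
proof -
  have N2: "N \<ge> 2" using assms by linarith
  have "Eperm N (\<lambda>\<sigma>. f (\<sigma> q) (\<sigma> q')) = fact (N - 2) * (\<Sum>i<N. \<Sum>j\<in>{..<N} - {i}. f i j) / fact N"
    unfolding Eperm_def using sum_perm2[of "{..<N}" q q' f] assms by simp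
  also have "fact N = real N * (real N - 1) * fact (N - 2)"
  proof -
    have "fact N = real N * fact (N - 1)" using N2 fact_reduce[of N] by simp
    also have "fact (N - 1) = of_nat (N - 1) * (fact (N - 1 - 1) :: real)"
      by (rule fact_reduce) (use N2 in simp)
    also have "N - 1 - 1 = N - 2" by simp
    also have "of_nat (N - 1) = real N - 1" using N2 by (simp add: of_nat_diff)
    finally show ?thesis by simp
  qed
  finally show ?thesis using N2 by simp
qed

lemma cross_id:
  assumes "N \<ge> 2"
  shows "(\<Sum>i<N. Y i p * Y i p') = (real N - 1) * Scov N Y p p' + real N * Ybar N Y p * Ybar N Y p'"
proof -
  define a where "a = Ybar N Y p"
  define a' where "a' = Ybar N Y p'"
  have sa: "(\<Sum>i<N. Y i p) = real N * a" unfolding a_def Ybar_def using assms by simp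
  have sa': "(\<Sum>i<N. Y i p') = real N * a'" unfolding a'_def Ybar_def using assms by simp
  have N1: "real N - 1 \<noteq> 0" using assms by simp
  have "(real N - 1) * Scov N Y p p' = (\<Sum>i<N. (Y i p - a) * (Y i p' - a'))"
    unfolding Scov_def a_def a'_def using N1 by simp
  also have "\<dots> = (\<Sum>i<N. Y i p * Y i p') - a' * (\<Sum>i<N. Y i p) - a * (\<Sum>i<N. Y i p') + real N * a * a'"
    by (simp add: algebra_simps sum.distrib sum_subtractf sum_distrib_left)
  finally show ?thesis unfolding sa sa' a_def[symmetric] a'_def[symmetric] by (simp add: algebra_simps)
qed

lemma EOO:
  assumes N2: "N \<ge> 2" and p: "p < N" and p': "p' < N"
  shows "Eperm N (\<lambda>\<sigma>. obs Y \<sigma> p * obs Y \<sigma> p') = Ybar N Y p * Ybar N Y p'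
     + (if p = p' then Scov N Y p p else 0) - Scov N Y p p' / real N"
proof (cases "p = p'")
  case True
  have "Eperm N (\<lambda>\<sigma>. obs Y \<sigma> p * obs Y \<sigma> p') = (\<Sum>i<N. Y i p * Y i p) / real N"
    unfolding obs_def True using E1[OF p', of "\<lambda>i. Y i p' * Y i p'"] by simp
  also have "\<dots> = ((real N - 1) * Scov N Y p p + real N * Ybar N Y p * Ybar N Y p) / real N"
    using cross_id[OF N2] by simp
  finally show ?thesis using True N2 by (simp add: field_simps)
next
  case False
  define a where "a = Ybar N Y p"
  define a' where "a' = Ybar N Y p'"
  have sa: "(\<Sum>i<N. Y i p) = real N * a" unfolding a_def Ybar_def using N2 by simp
  have sa': "(\<Sum>i<N. Y i p') = real N * a'" unfolding a'_def Ybar_def using N2 by simp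
  have "Eperm N (\<lambda>\<sigma>. obs Y \<sigma> p * obs Y \<sigma> p') = (\<Sum>i<N. \<Sum>j\<in>{..<N} - {i}. Y i p * Y j p') / (real N * (real N - 1))"
    unfolding obs_def using E2[OF p p' False, of "\<lambda>i j. Y i p * Y j p'"] by simp
  also have "(\<Sum>i<N. \<Sum>j\<in>{..<N} - {i}. Y i p * Y j p') = (\<Sum>i<N. Y i p * (real N * a') - Y i p * Y i p')"
  proof (intro sum.cong refl)
    fix i assume i: "i \<in> {..<N}"
    have "(\<Sum>j\<in>{..<N} - {i}. Y i p * Y j p') = Y i p * (\<Sum>j\<in>{..<N} - {i}. Y j p')"
      by (simp add: sum_distrib_left)
    also have "(\<Sum>j\<in>{..<N} - {i}. Y j p') = real N * a' - Y i p'"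
      using i sa' by (simp add: sum_diff1)
    finally show "(\<Sum>j\<in>{..<N} - {i}. Y i p * Y j p') = Y i p * (real N * a') - Y i p * Y i p'"
      by (simp add: algebra_simps)
  qed
  also have "\<dots> = real N * a * (real N * a') - ((real N - 1) * Scov N Y p p' + real N * a * a')"
    unfolding sum_subtractf cross_id[OF N2] a_def[symmetric] a'_def[symmetric]
    by (simp add: sum_distrib_right[symmetric] sa)
  also have "(real N * a * (real N * a') - ((real N - 1) * Scov N Y p p' + real N * a * a')) / (real N * (real N - 1))
      = a * a' - Scov N Y p p' / real N"
  proof -
    have n0: "real N \<noteq> 0" and n1: "real N - 1 \<noteq> 0" using N2 by auto
    show ?thesis using n0 n1 by (simp add: field_simps)
  qed
  finally show ?thesis using False unfolding a_def a'_def by simp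
qed

lemma QF:
  assumes fin: "finite A" and N2: "N \<ge> 2"
  shows "(\<Sum>p\<in>A. \<Sum>p'\<in>A. d p * d p' * Scov N Y p p')
     = (\<Sum>i<N. (\<Sum>p\<in>A. d p * (Y i p - Ybar N Y p))^2) / (real N - 1)"
proof -
  let ?Z = "\<lambda>i p. Y i p - Ybar N Y p"
  have "(\<Sum>p\<in>A. \<Sum>p'\<in>A. d p * d p' * Scov N Y p p')
     = (\<Sum>p\<in>A. \<Sum>p'\<in>A. \<Sum>i<N. (d p * ?Z i p) * (d p' * ?Z i p')) / (real N - 1)"
    unfolding Scov_def by (simp add: sum_divide_distrib sum_distrib_left algebra_simps)
  also have "(\<Sum>p\<in>A. \<Sum>p'\<in>A. \<Sum>i<N. (d p * ?Z i p) * (d p' * ?Z i p'))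
     = (\<Sum>i<N. \<Sum>p\<in>A. \<Sum>p'\<in>A. (d p * ?Z i p) * (d p' * ?Z i p'))"
  proof -
    have "(\<Sum>p\<in>A. \<Sum>p'\<in>A. \<Sum>i<N. (d p * ?Z i p) * (d p' * ?Z i p'))
        = (\<Sum>p\<in>A. \<Sum>i<N. \<Sum>p'\<in>A. (d p * ?Z i p) * (d p' * ?Z i p'))"
      apply (rule sum.cong[OF refl]) apply (rule sum.swap) done
    also have "\<dots> = (\<Sum>i<N. \<Sum>p\<in>A. \<Sum>p'\<in>A. (d p * ?Z i p) * (d p' * ?Z i p'))"
      by (rule sum.swap)
    finally show ?thesis .
  qed
  also have "\<dots> = (\<Sum>i<N. (\<Sum>p\<in>A. d p * ?Z i p)^2)"
    by (simp add: power2_eq_square sum_product)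
  finally show ?thesis by simp
qed

lemma CS_sum:
  fixes z :: "nat \<Rightarrow> real"
  assumes "finite A"
  shows "(\<Sum>p\<in>A. z p)^2 \<le> real (card A) * (\<Sum>p\<in>A. (z p)^2)"
proof -
  have "0 \<le> (\<Sum>p\<in>A. \<Sum>p'\<in>A. (z p - z p')^2)" by (intro sum_nonneg) auto
  also have "(\<Sum>p\<in>A. \<Sum>p'\<in>A. (z p - z p')^2) = 2 * real (card A) * (\<Sum>p\<in>A. (z p)^2) - 2 * (\<Sum>p\<in>A. z p)^2"
    by (simp add: power2_eq_square algebra_simps sum.distrib sum_subtractf sum_distrib_left sum_distrib_right sum_product)
  finally show ?thesis by simp
qed



lemma final_arith:
  fixes N m mu Q Sq K Sp rho T D :: real
  assumes N3: "N \<ge> 3" and m2: "m \<ge> 2" and mu: "mu = inverse ((1 - 2 / N) * (1 - 1 / m)^2)"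
    and Qb: "Q \<le> 2 * (1 - 1/m)^2 * Sq + 2 * K / m^2"
    and Kb: "2 * K \<le> (rho + m - 1) * Sp"
    and T: "T = (1 - 1/m)^2 * Sq + Sp / m^2"
  shows "mu * (D^2 + T - Q / N) \<ge> Sq + mu / m^2 * (1 - rho / N - (m - 1) / N) * Sp + mu * D^2"
proof -
  have Npos: "N > 0" using N3 by simp
  have mpos: "m > 0" using m2 by simp
  have a1: "1 - 2 / N > 0" using N3 by (simp add: field_simps)
  have a2: "(1 - 1 / m)^2 > 0" using m2 by (simp add: field_simps)
  have mupos: "mu > 0" unfolding mu using a1 a2 by simp
  have mu1: "mu * ((1 - 2 / N) * (1 - 1 / m)^2) = 1" unfolding mu
    by (rule left_inverse) (use a1 a2 in auto)
  have "Q / N \<le> (2 * (1 - 1/m)^2 * Sq + (rho + m - 1) * Sp / m^2) / N"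
  proof -
    have "Q \<le> 2 * (1 - 1/m)^2 * Sq + (rho + m - 1) * Sp / m^2"
      using Qb Kb mpos by (smt (verit) divide_right_mono zero_le_power2 divide_le_cancel power2_less_0)
    thus ?thesis using Npos by (simp add: divide_right_mono)
  qed
  hence hq: "T - (2 * (1 - 1/m)^2 * Sq + (rho + m - 1) * Sp / m^2) / N \<le> T - Q / N"
    by (rule diff_left_mono)
  have eq: "T - (2 * (1 - 1/m)^2 * Sq + (rho + m - 1) * Sp / m^2) / N
      = (1 - 1/m)^2 * Sq * (1 - 2 / N) + Sp / m^2 * (1 - rho / N - (m - 1) / N)"
    unfolding T using Npos mpos by (simp add: field_simps)
  have "T - Q / N \<ge> (1 - 1/m)^2 * Sq * (1 - 2 / N) + Sp / m^2 * (1 - rho / N - (m - 1) / N)"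
    using hq unfolding eq .
  hence "mu * (T - Q / N) \<ge> mu * ((1 - 1/m)^2 * Sq * (1 - 2 / N) + Sp / m^2 * (1 - rho / N - (m - 1) / N))"
    using mupos by (simp add: mult_left_mono)
  also have "mu * ((1 - 1/m)^2 * Sq * (1 - 2 / N) + Sp / m^2 * (1 - rho / N - (m - 1) / N))
     = Sq * (mu * ((1 - 2 / N) * (1 - 1 / m)^2)) + mu / m^2 * (1 - rho / N - (m - 1) / N) * Sp"
    by (simp add: algebra_simps)
  finally show ?thesis unfolding mu1 by (simp add: algebra_simps)
qed

lemma sq_sum_le: fixes x y :: real shows "(x + y)^2 \<le> 2 * x^2 + 2 * y^2"
proof -
  have "0 \<le> (x - y)^2" by simp
  thus ?thesis by (simp add: power2_eq_square algebra_simps)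
qed

lemma main_ineq:
  fixes N :: nat and Y :: "nat \<Rightarrow> nat \<Rightarrow> real" and g :: "nat set" and q :: nat
  assumes Spos: "\<forall>q<N. Scov N Y q q > 0" and gsub: "g \<subseteq> {..<N}" and fin: "finite g"
    and cg: "card g \<ge> 2" and q: "q \<in> g" and N3: "N \<ge> 3"
  shows "Eperm N (Vhat N Y g q) \<ge> Scov N Y q q + Omega N Y g q + mu_grp N g * (Ybar N Y q - Ybar_grp N Y g)^2"
proof -
  have N2: "N \<ge> 2" using N3 by simp
  define m where "m = real (card g)"
  have m2: "m \<ge> 2" using cg unfolding m_def by simp
  have m0: "m \<noteq> 0" using m2 by simp
  define c where "c = (\<lambda>p. (if p = q then 1 else 0) - 1 / m)"
  define g' where "g' = g - {q}"
  have fin': "finite g'" using fin unfolding g'_def by simp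
  have gins: "g = insert q g'" and qg': "q \<notin> g'" using q unfolding g'_def by auto
  have cg': "real (card g') = m - 1" using q fin cg unfolding g'_def m_def by (simp add: of_nat_diff)
  have gN: "\<forall>p\<in>g. p < N" using gsub by auto
  have cq: "c q = 1 - 1/m" unfolding c_def by simp
  have cp: "c p = - 1/m" if "p \<in> g'" for p using that qg' unfolding c_def by auto
  define Sp where "Sp = (\<Sum>p\<in>g'. Scov N Y p p)"
  define K where "K = (\<Sum>p\<in>g'. \<Sum>p'\<in>g'. Scov N Y p p')"
  define Q where "Q = (\<Sum>p\<in>g. \<Sum>p'\<in>g. c p * c p' * Scov N Y p p')"
  define T where "T = (\<Sum>p\<in>g. (c p)^2 * Scov N Y p p)"
  define D where "D = Ybar N Y q - Ybar_grp N Y g"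
  define rho where "rho = rho_grp N Y g"
  define mu where "mu = mu_grp N g"
  have s1: "obs Y \<sigma> q - Yhat_grp Y g \<sigma> = (\<Sum>p\<in>g. c p * obs Y \<sigma> p)" for \<sigma>
  proof -
    have "(\<Sum>p\<in>g. c p * obs Y \<sigma> p) = (\<Sum>p\<in>g. (if p = q then 1 else 0) * obs Y \<sigma> p) - (\<Sum>p\<in>g. obs Y \<sigma> p) / m"
      unfolding c_def by (simp add: left_diff_distrib sum_subtractf sum_divide_distrib)
    also have "(\<Sum>p\<in>g. (if p = q then 1 else 0) * obs Y \<sigma> p) = obs Y \<sigma> q" by (rule sum_delta_l[OF fin q])
    finally show ?thesis unfolding Yhat_grp_def m_def by simp
  qed
  have s2: "Vhat N Y g q = (\<lambda>\<sigma>. mu * (\<Sum>p\<in>g. \<Sum>p'\<in>g. c p * c p' * (obs Y \<sigma> p * obs Y \<sigma> p')))"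
  proof
    fix \<sigma>
    show "Vhat N Y g q \<sigma> = mu * (\<Sum>p\<in>g. \<Sum>p'\<in>g. c p * c p' * (obs Y \<sigma> p * obs Y \<sigma> p'))"
      unfolding Vhat_def s1 mu_def by (simp add: power2_eq_square sum_product algebra_simps)
  qed
  have s3: "Eperm N (Vhat N Y g q) = mu * (\<Sum>p\<in>g. \<Sum>p'\<in>g. c p * c p' * Eperm N (\<lambda>\<sigma>. obs Y \<sigma> p * obs Y \<sigma> p'))"
    unfolding s2 by (simp add: Eperm_cmult Eperm_sum[OF fin])
  also have "\<dots> = mu * (\<Sum>p\<in>g. \<Sum>p'\<in>g. c p * c p' * (Ybar N Y p * Ybar N Y p' + (if p = p' then Scov N Y p p else 0) - Scov N Y p p' / real N))"
  proof -
    have "(\<Sum>p\<in>g. \<Sum>p'\<in>g. c p * c p' * Eperm N (\<lambda>\<sigma>. obs Y \<sigma> p * obs Y \<sigma> p'))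
      = (\<Sum>p\<in>g. \<Sum>p'\<in>g. c p * c p' * (Ybar N Y p * Ybar N Y p' + (if p = p' then Scov N Y p p else 0) - Scov N Y p p' / real N))"
    proof (intro sum.cong refl)
      fix p p' assume "p \<in> g" "p' \<in> g"
      thus "c p * c p' * Eperm N (\<lambda>\<sigma>. obs Y \<sigma> p * obs Y \<sigma> p') = c p * c p' * (Ybar N Y p * Ybar N Y p' + (if p = p' then Scov N Y p p else 0) - Scov N Y p p' / real N)"
        using EOO[OF N2, of p p' Y] gN by simp
    qed
    thus ?thesis by simp
  qed
  also have "(\<Sum>p\<in>g. \<Sum>p'\<in>g. c p * c p' * (Ybar N Y p * Ybar N Y p' + (if p = p' then Scov N Y p p else 0) - Scov N Y p p' / real N))
      = D^2 + T - Q / real N"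
  proof -
    have pt: "c p * c p' * (Ybar N Y p * Ybar N Y p' + (if p = p' then Scov N Y p p else 0) - Scov N Y p p' / real N)
       = (c p * Ybar N Y p) * (c p' * Ybar N Y p') + (if p' = p then c p * c p * Scov N Y p p else 0) - (c p * c p' * Scov N Y p p') / real N" for p p'
      by (auto simp: algebra_simps)
    have e1: "(\<Sum>p\<in>g. \<Sum>p'\<in>g. (c p * Ybar N Y p) * (c p' * Ybar N Y p')) = D^2"
    proof -
      have "(\<Sum>p\<in>g. c p * Ybar N Y p) = (\<Sum>p\<in>g. (if p = q then 1 else 0) * Ybar N Y p) - (\<Sum>p\<in>g. Ybar N Y p) / m"
        unfolding c_def by (simp add: left_diff_distrib sum_subtractf sum_divide_distrib)
      also have "(\<Sum>p\<in>g. (if p = q then 1 else 0) * Ybar N Y p) = Ybar N Y q" by (rule sum_delta_l[OF fin q])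
      finally have "(\<Sum>p\<in>g. c p * Ybar N Y p) = D" unfolding D_def Ybar_grp_def m_def by simp
      thus ?thesis unfolding power2_eq_square sum_product[symmetric] by simp
    qed
    have e2: "(\<Sum>p\<in>g. \<Sum>p'\<in>g. (if p' = p then c p * c p * Scov N Y p p else 0)) = T"
      unfolding T_def using fin by (simp add: power2_eq_square)
    have e3: "(\<Sum>p\<in>g. \<Sum>p'\<in>g. (c p * c p' * Scov N Y p p') / real N) = Q / real N"
      unfolding Q_def by (simp add: sum_divide_distrib)
    show ?thesis unfolding pt sum.distrib sum_subtractf e1 e2 e3 ..
  qed
  finally have E: "Eperm N (Vhat N Y g q) = mu * (D^2 + T - Q / real N)" .
  have sT: "T = (1 - 1/m)^2 * Scov N Y q q + Sp / m^2"
  proof -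
    have "T = (c q)^2 * Scov N Y q q + (\<Sum>p\<in>g'. (c p)^2 * Scov N Y p p)"
      unfolding T_def gins using fin' qg' by simp
    also have "(\<Sum>p\<in>g'. (c p)^2 * Scov N Y p p) = (\<Sum>p\<in>g'. Scov N Y p p / m^2)"
      by (intro sum.cong refl) (simp add: cp power_divide)
    finally show ?thesis unfolding cq Sp_def by (simp add: sum_divide_distrib)
  qed
  define Z where "Z = (\<lambda>i p. Y i p - Ybar N Y p)"
  have N1pos: "real N - 1 > 0" using N2 by simp
  have Qeq: "Q = (\<Sum>i<N. (\<Sum>p\<in>g. c p * Z i p)^2) / (real N - 1)"
    unfolding Q_def Z_def by (rule QF[OF fin N2])
  have split: "(\<Sum>p\<in>g. c p * Z i p) = (1 - 1/m) * Z i q + (- 1/m) * (\<Sum>p\<in>g'. Z i p)" for i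
  proof -
    have "(\<Sum>p\<in>g. c p * Z i p) = c q * Z i q + (\<Sum>p\<in>g'. c p * Z i p)"
      unfolding gins using fin' qg' by simp
    also have "(\<Sum>p\<in>g'. c p * Z i p) = (\<Sum>p\<in>g'. (- 1/m) * Z i p)"
      by (intro sum.cong refl) (simp add: cp)
    finally show ?thesis unfolding cq by (simp add: sum_distrib_left)
  qed
  have Sqq: "Scov N Y q q = (\<Sum>i<N. (Z i q)^2) / (real N - 1)"
    unfolding Scov_def Z_def by (simp add: power2_eq_square)
  have Keq: "K = (\<Sum>i<N. (\<Sum>p\<in>g'. Z i p)^2) / (real N - 1)"
    using QF[OF fin' N2, of "\<lambda>_. 1" Y] unfolding K_def Z_def by simp
  have Qb: "Q \<le> 2 * (1 - 1/m)^2 * Scov N Y q q + 2 * K / m^2"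
  proof -
    have "(\<Sum>i<N. (\<Sum>p\<in>g. c p * Z i p)^2) \<le> (\<Sum>i<N. 2 * (1 - 1/m)^2 * (Z i q)^2 + 2 / m^2 * (\<Sum>p\<in>g'. Z i p)^2)"
    proof (intro sum_mono)
      fix i
      show "(\<Sum>p\<in>g. c p * Z i p)^2 \<le> 2 * (1 - 1/m)^2 * (Z i q)^2 + 2 / m^2 * (\<Sum>p\<in>g'. Z i p)^2"
        unfolding split using sq_sum_le[of "(1 - 1/m) * Z i q" "(- 1/m) * (\<Sum>p\<in>g'. Z i p)"]
        by (simp add: power_mult_distrib power_divide)
    qed
    also have "\<dots> = 2 * (1 - 1/m)^2 * (\<Sum>i<N. (Z i q)^2) + 2 / m^2 * (\<Sum>i<N. (\<Sum>p\<in>g'. Z i p)^2)"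
      by (simp add: sum.distrib sum_distrib_left)
    finally have "Q \<le> (2 * (1 - 1/m)^2 * (\<Sum>i<N. (Z i q)^2) + 2 / m^2 * (\<Sum>i<N. (\<Sum>p\<in>g'. Z i p)^2)) / (real N - 1)"
      unfolding Qeq using N1pos by (simp add: divide_right_mono)
    also have "\<dots> = 2 * (1 - 1/m)^2 * Scov N Y q q + 2 * K / m^2"
      unfolding Sqq Keq by (simp add: add_divide_distrib)
    finally show ?thesis .
  qed
  have K1: "K \<le> (m - 1) * Sp"
  proof -
    have "(\<Sum>i<N. (\<Sum>p\<in>g'. Z i p)^2) \<le> (\<Sum>i<N. (m - 1) * (\<Sum>p\<in>g'. (Z i p)^2))"
      by (intro sum_mono) (use CS_sum[OF fin'] cg' in simp)
    also have "\<dots> = (m - 1) * (\<Sum>p\<in>g'. \<Sum>i<N. (Z i p)^2)"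
      by (simp add: sum_distrib_left[symmetric] sum.swap[of _ "{..<N}" g'])
    finally have "K \<le> (m - 1) * (\<Sum>p\<in>g'. \<Sum>i<N. (Z i p)^2) / (real N - 1)"
      unfolding Keq using N1pos by (simp add: divide_right_mono)
    also have "\<dots> = (m - 1) * Sp"
      unfolding Sp_def Scov_def Z_def by (simp add: sum_divide_distrib[symmetric] power2_eq_square)
    finally show ?thesis .
  qed
  have K2: "K \<le> rho * Sp"
  proof -
    define x where "x = (\<lambda>p. if p = q then 0 else sqrt (Scov N Y p p))"
    have sym: "\<forall>p\<in>g. \<forall>p'\<in>g. Scorr N Y p p' = Scorr N Y p' p"
      by (simp add: Scorr_def Scov_def mult.commute)
    have gne: "g \<noteq> {}" using q by blast
    have Sp': "Scov N Y p p > 0" if "p \<in> g'" for p using that Spos gsub gins by auto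
    have "qf (Scorr N Y) g x \<le> rho * (\<Sum>p\<in>g. (x p)^2)"
      using rho_bound[OF fin gne sym] unfolding rho_def rho_grp_def by blast
    moreover have "(\<Sum>p\<in>g. (x p)^2) = Sp"
    proof -
      have "(\<Sum>p\<in>g. (x p)^2) = (\<Sum>p\<in>g'. (x p)^2)" unfolding gins using fin' qg' by (simp add: x_def)
      also have "\<dots> = Sp" unfolding Sp_def
        by (intro sum.cong refl) (use Sp' qg' in \<open>auto simp: x_def less_imp_le\<close>)
      finally show ?thesis .
    qed
    moreover have "qf (Scorr N Y) g x = K"
    proof -
      have "qf (Scorr N Y) g x = (\<Sum>p\<in>g'. x p * (\<Sum>p'\<in>g'. Scorr N Y p p' * x p'))"
        unfolding qf_def gins using fin' qg' by (simp add: x_def)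
      also have "\<dots> = K" unfolding K_def
      proof (intro sum.cong refl)
        fix p assume p: "p \<in> g'"
        have "x p * (\<Sum>p'\<in>g'. Scorr N Y p p' * x p') = (\<Sum>p'\<in>g'. x p * (Scorr N Y p p' * x p'))"
          by (simp add: sum_distrib_left)
        also have "\<dots> = (\<Sum>p'\<in>g'. Scov N Y p p')"
        proof (intro sum.cong refl)
          fix p' assume p': "p' \<in> g'"
          have a: "Scov N Y p p > 0" and b: "Scov N Y p' p' > 0" using Sp' p p' by auto
          have xp: "x p = sqrt (Scov N Y p p)" and xp': "x p' = sqrt (Scov N Y p' p')" using p p' qg' unfolding x_def by auto
          show "x p * (Scorr N Y p p' * x p') = Scov N Y p p'"
            unfolding xp xp' Scorr_def using a b by (simp add: real_sqrt_mult field_simps)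
        qed
        finally show "x p * (\<Sum>p'\<in>g'. Scorr N Y p p' * x p') = (\<Sum>p'\<in>g'. Scov N Y p p')" .
      qed
      finally show ?thesis .
    qed
    ultimately show ?thesis by simp
  qed
  have Kb: "2 * K \<le> (rho + m - 1) * Sp" using K1 K2 by (simp add: algebra_simps)
  have mu_eq: "mu = inverse ((1 - 2 / real N) * (1 - 1 / m)^2)" unfolding mu_def mu_grp_def m_def ..
  have Om: "Omega N Y g q = mu / m^2 * (1 - rho / real N - (m - 1) / real N) * Sp"
    unfolding Omega_def mu_def m_def rho_def Sp_def g'_def ..
  have "mu * (D^2 + T - Q / real N) \<ge> Scov N Y q q + mu / m^2 * (1 - rho / real N - (m - 1) / real N) * Sp + mu * D^2"
    by (rule final_arith[OF _ m2 mu_eq Qb Kb sT]) (use N3 in simp)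
  thus ?thesis unfolding E Om D_def mu_def .
qed



lemma S2_id: "(Scov 2 Y 0 1)^2 = Scov 2 Y 0 0 * Scov 2 Y 1 1"
  by (simp add: Scov_def Ybar_def numeral_2_eq_2 lessThan_Suc power2_eq_square field_simps)

lemma N2_contra:
  assumes Spos: "\<forall>q<N. Scov N Y q q > 0" and N2: "N = 2" and gsub: "g \<subseteq> {..<N}"
    and cg: "card g \<ge> 2" and c5: "real N - rho_grp N Y g - (real (card g) - 1) \<ge> 0"
  shows False
proof -
  have g01: "g \<subseteq> {0,1}" using gsub N2 by auto
  have "card {0::nat,1} = 2" by simp
  hence g: "g = {0,1}" using card_subset_eq[OF _ g01] cg card_mono[OF _ g01] by fastforce
  have a: "Scov 2 Y 0 0 > 0" and b: "Scov 2 Y 1 1 > 0" using Spos N2 by auto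
  have "(Scov 2 Y 0 1)^2 > 0" unfolding S2_id using a b by simp
  hence S01: "Scov 2 Y 0 1 \<noteq> 0" by auto
  define r where "r = Scorr 2 Y 0 1"
  have r0: "r \<noteq> 0" unfolding r_def Scorr_def using S01 a b by simp
  have R00: "Scorr 2 Y 0 0 = 1" unfolding Scorr_def using a by simp
  have R11: "Scorr 2 Y 1 1 = 1" unfolding Scorr_def using b by simp
  have R10: "Scorr 2 Y 1 0 = r" unfolding r_def Scorr_def Scov_def by (simp add: mult.commute)
  have sym: "\<forall>p\<in>g. \<forall>p'\<in>g. Scorr N Y p p' = Scorr N Y p' p"
    by (simp add: Scorr_def Scov_def mult.commute)
  define x where "x = (\<lambda>i::nat. if i = 0 then 1 else sgn r)"
  have "qf (Scorr N Y) g x \<le> rho_grp N Y g * (\<Sum>p\<in>g. (x p)^2)"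
    using rho_bound[OF _ _ sym] g unfolding rho_grp_def by simp
  moreover have "(\<Sum>p\<in>g. (x p)^2) = 2" unfolding g x_def using r0 by (simp add: sgn_if)
  moreover have "qf (Scorr N Y) g x = 2 + 2 * \<bar>r\<bar>"
    unfolding g qf_def x_def N2 using R00 R11 R10 r0 r_def
    by (simp add: sgn_if abs_if)
  ultimately have "2 + 2 * \<bar>r\<bar> \<le> rho_grp N Y g * 2" by simp
  moreover have "rho_grp N Y g \<le> 1" using c5 N2 g by simp
  ultimately have "\<bar>r\<bar> \<le> 0" by simp
  thus False using r0 by simp
qed

theorem lemma2:
  fixes N :: nat and Y :: "nat \<Rightarrow> nat \<Rightarrow> real" and P :: "nat set set"
  assumes "\<forall>q<N. Scov N Y q q > 0"
    and "grouping N P"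
  shows "(\<forall>g\<in>P. Eperm N (Yhat_grp Y g) = Ybar_grp N Y g)
    \<and> (condition5 N Y P \<longrightarrow>
        (\<forall>g\<in>P. \<forall>q\<in>g.
           Eperm N (Vhat N Y g q) \<ge> Scov N Y q q + Omega N Y g q
              + mu_grp N g * (Ybar N Y q - Ybar_grp N Y g)^2
           \<and> Omega N Y g q \<ge> 0))"
proof -
  note Spos = assms(1)
  have gp: "g \<subseteq> {..<N} \<and> finite g \<and> card g \<ge> 2" if "g \<in> P" for g
  proof -
    have "g \<subseteq> {..<N}" using assms(2) that unfolding grouping_def by blast
    moreover have "card g \<ge> 2" using assms(2) that unfolding grouping_def by blast
    moreover hence "finite g" by (metis card.infinite not_numeral_le_zero)
    ultimately show ?thesis by blast
  qed
  have Nge: "N \<ge> 2" if "g \<in> P" for g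
  proof -
    have "card g \<le> card {..<N}" using gp[OF that] by (intro card_mono) auto
    thus ?thesis using gp[OF that] by simp
  qed
  have part1: "Eperm N (Yhat_grp Y g) = Ybar_grp N Y g" if g: "g \<in> P" for g
  proof -
    have gN: "\<forall>q\<in>g. q < N" using gp[OF g] by auto
    have fin: "finite g" using gp[OF g] by blast
    have "Yhat_grp Y g = (\<lambda>\<sigma>. inverse (real (card g)) * (\<Sum>q\<in>g. Y (\<sigma> q) q))"
      unfolding Yhat_grp_def obs_def by (simp add: divide_inverse mult.commute)
    hence "Eperm N (Yhat_grp Y g) = inverse (real (card g)) * (\<Sum>q\<in>g. Eperm N (\<lambda>\<sigma>. Y (\<sigma> q) q))"
      by (simp add: Eperm_cmult Eperm_sum[OF fin])
    also have "(\<Sum>q\<in>g. Eperm N (\<lambda>\<sigma>. Y (\<sigma> q) q)) = (\<Sum>q\<in>g. Ybar N Y q)"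
    proof (intro sum.cong refl)
      fix q assume "q \<in> g"
      hence "q < N" using gN by blast
      thus "Eperm N (\<lambda>\<sigma>. Y (\<sigma> q) q) = Ybar N Y q"
        using E1[of q N "\<lambda>i. Y i q"] unfolding Ybar_def by simp
    qed
    finally show ?thesis unfolding Ybar_grp_def by (simp add: divide_inverse mult.commute)
  qed
  have part2: "Eperm N (Vhat N Y g q) \<ge> Scov N Y q q + Omega N Y g q
              + mu_grp N g * (Ybar N Y q - Ybar_grp N Y g)^2 \<and> Omega N Y g q \<ge> 0"
    if c5: "condition5 N Y P" and g: "g \<in> P" and q: "q \<in> g" for g q
  proof -
    have N2: "N \<ge> 2" using Nge[OF g] .
    have gs: "g \<subseteq> {..<N}" and fin: "finite g" and cg: "card g \<ge> 2" using gp[OF g] by auto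
    have c5g: "real N - rho_grp N Y g - (real (card g) - 1) \<ge> 0" using c5 g unfolding condition5_def by blast
    have Om: "Omega N Y g q \<ge> 0"
    proof -
      have "1 - 2 / real N \<ge> 0" using N2 by (simp add: field_simps)
      hence "mu_grp N g \<ge> 0" unfolding mu_grp_def by simp
      moreover have "1 - rho_grp N Y g / real N - (real (card g) - 1) / real N \<ge> 0"
      proof -
        have "1 - rho_grp N Y g / real N - (real (card g) - 1) / real N
           = (real N - rho_grp N Y g - (real (card g) - 1)) / real N" using N2 by (simp add: field_simps)
        thus ?thesis using c5g by simp
      qed
      moreover have "(\<Sum>q'\<in>g - {q}. Scov N Y q' q') \<ge> 0"
        using Spos gs by (intro sum_nonneg) (auto intro: less_imp_le)
      ultimately show ?thesis unfolding Omega_def by (simp add: mult_nonneg_nonneg)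
    qed
    show ?thesis
    proof (cases "N = 2")
      case True
      thus ?thesis using N2_contra[OF Spos True gs cg c5g] by blast
    next
      case False
      hence "N \<ge> 3" using N2 by simp
      thus ?thesis using main_ineq[OF Spos gs fin cg q] Om by simp
    qed
  qed
  show ?thesis using part1 part2 by blast
qed


end
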